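(* Let $u\geq 2$ be an integer and $C(u)=\{n\in\mathbb{Z} : u\nmid n\}$. Then every non-negative integer is a sum of at most $5940$ squares of elements of $C(u)$.
   Context: The empty sum is $0$. *)

theory Defs
  imports Main
begin

definition C :: "int \<Rightarrow> int set" where
  "C u = {n. \<not> u dvd n}"

end

theory Submission
  imports Defs "HOL-Computational_Algebra.Primes"
begin

definition sos4 :: "int \<Rightarrow> bool" where
  "sos4 n \<longleftrightarrow> (\<exists>a b c d. n = a\<^sup>2 + b\<^sup>2 + c\<^sup>2 + d\<^sup>2)"

lemma sos4_mult:
  assumes "sos4 x" "sos4 y" shows "sos4 (x*y)"
proof -
  obtain a b c d where x: "x = a\<^sup>2 + b\<^sup>2 + c\<^sup>2 + d\<^sup>2" using assms(1) sos4_def by auto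
  obtain e f g h where y: "y = e\<^sup>2 + f\<^sup>2 + g\<^sup>2 + h\<^sup>2" using assms(2) sos4_def by auto
  have "x*y = (a*e - b*f - c*g - d*h)\<^sup>2 + (a*f + b*e + c*h - d*g)\<^sup>2
     + (a*g - b*h + c*e + d*f)\<^sup>2 + (a*h + b*g - c*f + d*e)\<^sup>2"
    unfolding x y by (simp add: power2_eq_square algebra_simps)
  then show ?thesis unfolding sos4_def by blast
qed

lemma two_sq:
  fixes a b :: int assumes "even (a+b)"
  shows "a\<^sup>2 + b\<^sup>2 = 2 * (((a+b) div 2)\<^sup>2 + ((a-b) div 2)\<^sup>2)"
proof -
  obtain k where k: "a + b = 2*k" using assms by (blast elim: dvdE)
  have b: "b = 2*k - a" using k by simp
  have "(a - b) div 2 = a - k" unfolding b by simp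
  moreover have "(a+b) div 2 = k" using k by simp
  ultimately show ?thesis unfolding b by (simp add: power2_eq_square algebra_simps)
qed

lemma sos4_half:
  assumes "even (a\<^sup>2 + b\<^sup>2 + c\<^sup>2 + d\<^sup>2 :: int)"
  shows "\<exists>a' b' c' d'. a\<^sup>2 + b\<^sup>2 + c\<^sup>2 + d\<^sup>2 = 2 * (a'\<^sup>2 + b'\<^sup>2 + c'\<^sup>2 + d'\<^sup>2)"
proof -
  have E: "even (a + b + c + d)" using assms by (simp add: power2_eq_square)
  have "(even (a+b) \<and> even (c+d)) \<or> (even (a+c) \<and> even (b+d)) \<or> (even (a+d) \<and> even (b+c))"
    using E by presburger
  then show ?thesis
  proof (elim disjE conjE)
    assume h: "even (a+b)" "even (c+d)"
    have "a\<^sup>2 + b\<^sup>2 + c\<^sup>2 + d\<^sup>2 = 2 * (((a+b) div 2)\<^sup>2 + ((a-b) div 2)\<^sup>2 + ((c+d) div 2)\<^sup>2 + ((c-d) div 2)\<^sup>2)"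
      using two_sq[OF h(1)] two_sq[OF h(2)] by simp
    then show ?thesis by blast
  next
    assume h: "even (a+c)" "even (b+d)"
    have "a\<^sup>2 + b\<^sup>2 + c\<^sup>2 + d\<^sup>2 = 2 * (((a+c) div 2)\<^sup>2 + ((a-c) div 2)\<^sup>2 + ((b+d) div 2)\<^sup>2 + ((b-d) div 2)\<^sup>2)"
      using two_sq[OF h(1)] two_sq[OF h(2)] by simp
    then show ?thesis by blast
  next
    assume h: "even (a+d)" "even (b+c)"
    have "a\<^sup>2 + b\<^sup>2 + c\<^sup>2 + d\<^sup>2 = 2 * (((a+d) div 2)\<^sup>2 + ((a-d) div 2)\<^sup>2 + ((b+c) div 2)\<^sup>2 + ((b-c) div 2)\<^sup>2)"
      using two_sq[OF h(1)] two_sq[OF h(2)] by simp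
    then show ?thesis by blast
  qed
qed

lemma euler_id:
  fixes y1 y2 y3 y4 q1 q2 q3 q4 m :: int
  shows "((y1+m*q1)\<^sup>2 + (y2+m*q2)\<^sup>2 + (y3+m*q3)\<^sup>2 + (y4+m*q4)\<^sup>2) * (y1\<^sup>2+y2\<^sup>2+y3\<^sup>2+y4\<^sup>2)
   = (y1\<^sup>2+y2\<^sup>2+y3\<^sup>2+y4\<^sup>2 + m*(q1*y1+q2*y2+q3*y3+q4*y4))\<^sup>2
   + (m*(-q1*y2+q2*y1-q3*y4+q4*y3))\<^sup>2
   + (m*(-q1*y3+q2*y4+q3*y1-q4*y2))\<^sup>2
   + (m*(-q1*y4-q2*y3+q3*y2+q4*y1))\<^sup>2"
  by (simp add: power2_eq_square algebra_simps)

lemma red: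
  fixes a m :: int assumes "m > 0" "odd m"
  shows "\<exists>q y. a = y + m*q \<and> (2*y)\<^sup>2 \<le> (m-1)\<^sup>2"
proof -
  define h where "h = m div 2"
  have m: "m = 2*h + 1" using assms(2) unfolding h_def by presburger
  define q where "q = (a+h) div m"
  define y where "y = (a+h) mod m - h"
  have e: "a = y + m*q" unfolding y_def q_def by (simp add: algebra_simps)
  have "0 \<le> (a+h) mod m" "(a+h) mod m < m" using assms(1) by auto
  then have "\<bar>2*y\<bar> \<le> \<bar>m-1\<bar>" unfolding y_def using m by auto
  then have "(2*y)\<^sup>2 \<le> (m-1)\<^sup>2" using abs_le_square_iff by blast
  then show ?thesis using e by blast
qed

lemma descent:
  fixes p :: int
  assumes pr: "prime p"
  shows "0 < m \<Longrightarrow> m < p \<Longrightarrow> sos4 (m*p) \<Longrightarrow> sos4 p"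
proof (induction "nat m" arbitrary: m rule: less_induct)
  case less
  have p2: "p \<ge> 2" using prime_ge_2_int[OF pr] .
  consider "m = 1" | "m > 1 \<and> even m" | "m > 1 \<and> odd m" using less.prems(1) by linarith
  then show ?case
  proof cases
    case 1
    then show ?thesis using less.prems by simp
  next
    case 2
    obtain a b c d where abcd: "m*p = a\<^sup>2 + b\<^sup>2 + c\<^sup>2 + d\<^sup>2" using less.prems(3) sos4_def by auto
    have "even (a\<^sup>2 + b\<^sup>2 + c\<^sup>2 + d\<^sup>2)" using 2 abcd[symmetric] by simp
    then obtain a' b' c' d' where h: "m*p = 2*(a'\<^sup>2 + b'\<^sup>2 + c'\<^sup>2 + d'\<^sup>2)"
      using sos4_half abcd by metis
    have mm: "m = 2 * (m div 2)" using 2 by simp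
    have "(m div 2) * p = a'\<^sup>2 + b'\<^sup>2 + c'\<^sup>2 + d'\<^sup>2" using h mm
      by (metis mult.assoc mult_cancel_left zero_neq_numeral)
    then have "sos4 ((m div 2) * p)" unfolding sos4_def by blast
    moreover have "nat (m div 2) < nat m" "0 < m div 2" "m div 2 < p" using 2 less.prems by auto
    ultimately show ?thesis using less.hyps by blast
  next
    case 3
    then have m0: "m > 0" and mo: "odd m" by auto
    obtain a1 a2 a3 a4 where A: "m*p = a1\<^sup>2 + a2\<^sup>2 + a3\<^sup>2 + a4\<^sup>2" using less.prems(3) sos4_def by auto
    obtain q1 y1 where 1: "a1 = y1 + m*q1" "(2*y1)\<^sup>2 \<le> (m-1)\<^sup>2" using red[OF m0 mo] by blast
    obtain q2 y2 where 2: "a2 = y2 + m*q2" "(2*y2)\<^sup>2 \<le> (m-1)\<^sup>2" using red[OF m0 mo] by blast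
    obtain q3 y3 where 3: "a3 = y3 + m*q3" "(2*y3)\<^sup>2 \<le> (m-1)\<^sup>2" using red[OF m0 mo] by blast
    obtain q4 y4 where 4: "a4 = y4 + m*q4" "(2*y4)\<^sup>2 \<le> (m-1)\<^sup>2" using red[OF m0 mo] by blast
    define S where "S = y1\<^sup>2+y2\<^sup>2+y3\<^sup>2+y4\<^sup>2"
    define r where "r = p - (2*(q1*y1+q2*y2+q3*y3+q4*y4) + m*(q1\<^sup>2+q2\<^sup>2+q3\<^sup>2+q4\<^sup>2))"
    have Sr: "S = m*r" using A unfolding S_def r_def 1(1) 2(1) 3(1) 4(1)
      by (simp add: power2_eq_square algebra_simps)
    have S0: "S \<ge> 0" unfolding S_def by simp
    have "4*S \<le> 4*(m-1)\<^sup>2" unfolding S_def using 1(2) 2(2) 3(2) 4(2) by (simp add: power_mult_distrib)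
    then have "S \<le> (m-1)\<^sup>2" by simp
    also have "\<dots> < m*m" using m0 by (simp add: power2_eq_square algebra_simps)
    finally have "m*r < m*m" using Sr by simp
    then have rm: "r < m" using m0 by simp
    have r0: "r \<ge> 0" using Sr S0 m0 by (simp add: zero_le_mult_iff)
    have rn0: "r \<noteq> 0"
    proof
      assume "r = 0"
      then have "S = 0" using Sr by simp
      then have "y1 = 0" "y2 = 0" "y3 = 0" "y4 = 0" unfolding S_def
        using zero_le_power2[of y1] zero_le_power2[of y2] zero_le_power2[of y3] zero_le_power2[of y4]
        by (smt (verit) zero_eq_power2)+
      then have "m*p = m*(m*(q1\<^sup>2+q2\<^sup>2+q3\<^sup>2+q4\<^sup>2))" using A 1 2 3 4
        by (simp add: power2_eq_square algebra_simps)
      then have "p = m*(q1\<^sup>2+q2\<^sup>2+q3\<^sup>2+q4\<^sup>2)" using m0 by simp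
      then have "m dvd p" by simp
      then have "m = 1 \<or> m = p" using pr m0 unfolding prime_int_iff by auto
      then show False using less.prems \<open>m > 1 \<and> odd m\<close> by auto
    qed
    define w1 where "w1 = r + (q1*y1+q2*y2+q3*y3+q4*y4)"
    define w2 where "w2 = -q1*y2+q2*y1-q3*y4+q4*y3"
    define w3 where "w3 = -q1*y3+q2*y4+q3*y1-q4*y2"
    define w4 where "w4 = -q1*y4-q2*y3+q3*y2+q4*y1"
    have "(m*m)*(r*p) = (m*p)*S" using Sr by (simp add: algebra_simps)
    also have "\<dots> = (S + m*(q1*y1+q2*y2+q3*y3+q4*y4))\<^sup>2 + (m*w2)\<^sup>2 + (m*w3)\<^sup>2 + (m*w4)\<^sup>2"
      unfolding A 1(1) 2(1) 3(1) 4(1) S_def w2_def w3_def w4_def by (rule euler_id)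
    also have "\<dots> = (m*m)*(w1\<^sup>2+w2\<^sup>2+w3\<^sup>2+w4\<^sup>2)" unfolding Sr w1_def
      by (simp add: power2_eq_square algebra_simps)
    finally have "r*p = w1\<^sup>2+w2\<^sup>2+w3\<^sup>2+w4\<^sup>2" using m0 by simp
    then have "sos4 (r*p)" unfolding sos4_def by blast
    moreover have "nat r < nat m" "0 < r" "r < p" using rm r0 rn0 less.prems by auto
    ultimately show ?thesis using less.hyps by blast
  qed
qed

lemma sq_inj:
  fixes p x x' :: int
  assumes pr: "prime p" and h: "2*h < p" and x: "0 \<le> x" "x \<le> h" and x': "0 \<le> x'" "x' \<le> h"
    and d: "p dvd x\<^sup>2 - x'\<^sup>2"
  shows "x = x'"
proof -
  have "x\<^sup>2 - x'\<^sup>2 = (x - x') * (x + x')" by (simp add: power2_eq_square algebra_simps)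
  then have "p dvd (x - x') \<or> p dvd (x + x')" using d pr prime_dvd_mult_iff by metis
  then show ?thesis
  proof
    assume "p dvd (x - x')"
    then have "p dvd \<bar>x - x'\<bar>" by simp
    moreover have "\<bar>x - x'\<bar> < p" using h x x' by auto
    ultimately have "\<bar>x - x'\<bar> = 0" using zdvd_imp_le by fastforce
    then show ?thesis by simp
  next
    assume "p dvd (x + x')"
    moreover have "x + x' < p" using h x x' by auto
    ultimately have "x + x' = 0" using zdvd_imp_le x x' by fastforce
    then show ?thesis using x x' by simp
  qed
qed

lemma exists_xy:
  fixes p :: int
  assumes pr: "prime p" and od: "odd p"
  shows "\<exists>x y. 0 \<le> x \<and> x \<le> (p-1) div 2 \<and> 0 \<le> y \<and> y \<le> (p-1) div 2 \<and> p dvd x\<^sup>2+y\<^sup>2+1"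
proof -
  define h where "h = (p-1) div 2"
  have ph: "p = 2*h+1" unfolding h_def using od by presburger
  have p2: "p \<ge> 2" using prime_ge_2_int[OF pr] .
  define A where "A = (\<lambda>x. x\<^sup>2 mod p) ` {0..h}"
  define B where "B = (\<lambda>y. (-1-y\<^sup>2) mod p) ` {0..h}"
  have iA: "inj_on (\<lambda>x. x\<^sup>2 mod p) {0..h}"
  proof (rule inj_onI)
    fix x x' assume "x \<in> {0..h}" "x' \<in> {0..h}" "x\<^sup>2 mod p = x'\<^sup>2 mod p"
    then show "x = x'" using sq_inj[OF pr, of h x x'] ph by (auto simp: mod_eq_dvd_iff)
  qed
  have iB: "inj_on (\<lambda>y. (-1-y\<^sup>2) mod p) {0..h}"
  proof (rule inj_onI)
    fix x x' assume a: "x \<in> {0..h}" "x' \<in> {0..h}" "(-1-x\<^sup>2) mod p = (-1-x'\<^sup>2) mod p"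
    then have "p dvd (-1-x\<^sup>2) - (-1-x'\<^sup>2)" by (simp add: mod_eq_dvd_iff)
    then have "p dvd x'\<^sup>2 - x\<^sup>2" by simp
    then show "x = x'" using sq_inj[OF pr, of h x' x] ph a by auto
  qed
  have cA: "card A = nat (h+1)" unfolding A_def using card_image[OF iA] by simp
  have cB: "card B = nat (h+1)" unfolding B_def using card_image[OF iB] by simp
  have sub: "A \<union> B \<subseteq> {0..<p}" unfolding A_def B_def using p2 by auto
  have "card (A \<union> B) \<le> card {0..<p}" using card_mono[OF _ sub] by simp
  then have "card (A \<union> B) \<le> nat p" by simp
  moreover have "card A + card B = card (A \<union> B) + card (A \<inter> B)"
    by (rule card_Un_Int) (auto simp: A_def B_def)
  moreover have "h \<ge> 0" using ph p2 by simp
  ultimately have "card (A \<inter> B) > 0" using cA cB ph by (simp add: nat_add_distrib[symmetric])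
  then obtain z where "z \<in> A \<inter> B" by (metis card.empty ex_in_conv less_irrefl)
  then obtain x y where xy: "x \<in> {0..h}" "y \<in> {0..h}" "x\<^sup>2 mod p = (-1-y\<^sup>2) mod p"
    unfolding A_def B_def by auto
  then have "p dvd x\<^sup>2 - (-1-y\<^sup>2)" by (simp add: mod_eq_dvd_iff)
  then have "p dvd x\<^sup>2+y\<^sup>2+1" by (simp add: algebra_simps)
  then show ?thesis using xy unfolding h_def by auto
qed

lemma prime_sos4:
  fixes p :: int
  assumes pr: "prime p"
  shows "sos4 p"
proof (cases "p = 2")
  case True
  then have "p = 1\<^sup>2 + 1\<^sup>2 + 0\<^sup>2 + 0\<^sup>2" by simp
  then show ?thesis unfolding sos4_def by blast
next
  case False
  have p2: "p \<ge> 2" using prime_ge_2_int[OF pr] .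
  have od: "odd p"
  proof
    assume "even p"
    then have "(2::int) dvd p" by simp
    moreover have "\<forall>m. 0 \<le> m \<and> m dvd p \<longrightarrow> m = 1 \<or> m = p" using pr prime_int_iff by blast
    then have "0 \<le> (2::int) \<and> (2::int) dvd p \<longrightarrow> (2::int) = 1 \<or> (2::int) = p" by (rule spec)
    ultimately have "(2::int) = 1 \<or> 2 = p" by simp
    then show False using False by auto
  qed
  obtain x y where xy: "0 \<le> x" "x \<le> (p-1) div 2" "0 \<le> y" "y \<le> (p-1) div 2" "p dvd x\<^sup>2+y\<^sup>2+1"
    using exists_xy[OF pr od] by blast
  define h where "h = (p-1) div 2"
  have ph: "p = 2*h+1" unfolding h_def using od by presburger
  obtain m where m: "x\<^sup>2+y\<^sup>2+1 = p*m" using xy(5) by (blast elim: dvdE)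
  have "x\<^sup>2 \<le> h\<^sup>2" "y\<^sup>2 \<le> h\<^sup>2" using xy unfolding h_def by (auto intro: power_mono)
  then have hx: "x*x \<le> h*h" "y*y \<le> h*h" by (simp_all add: power2_eq_square)
  have h1: "h \<ge> 1" using ph p2 by simp
  have hh: "h*h \<ge> 0" by simp
  have pp: "p*p = 4*(h*h) + 4*h + 1" using ph by (simp add: algebra_simps)
  have pm: "p*m = x*x + y*y + 1" using m by (simp add: power2_eq_square mult.commute)
  have "p*m < p*p" using hx h1 hh pp pm by linarith
  then have "m < p" using p2 by simp
  moreover have "m > 0"
  proof -
    have "0 \<le> x*x" "0 \<le> y*y" by simp_all
    then have "0 < p*m" using pm by linarith
    then show ?thesis using p2 zero_less_mult_pos[of p m] by simp
  qed
  moreover have "sos4 (m*p)"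
  proof -
    have "m*p = x\<^sup>2+y\<^sup>2+1\<^sup>2+0\<^sup>2" using m by (simp add: mult.commute)
    then show ?thesis unfolding sos4_def by blast
  qed
  ultimately show ?thesis using descent[OF pr] by blast
qed

lemma all_sos4:
  fixes n :: nat
  shows "sos4 (int n)"
proof (induction n rule: less_induct)
  case (less n)
  show ?case
  proof (cases "n \<le> 1")
    case True
    then have "int n = (int n)\<^sup>2 + 0\<^sup>2 + 0\<^sup>2 + 0\<^sup>2" by (cases n) auto
    then show ?thesis unfolding sos4_def by blast
  next
    case False
    then obtain p where p: "prime p" "p dvd n" using prime_factor_nat[of n] by auto
    then obtain k where k: "n = p*k" by (blast elim: dvdE)
    have "p \<ge> 2" using prime_ge_2_nat[OF p(1)] .
    have k0: "k \<noteq> 0"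
    proof
      assume "k = 0" with k False show False by simp
    qed
    then have "k < n" using mult_less_mono1[of 1 p k] k \<open>p \<ge> 2\<close> by simp
    then have "sos4 (int k)" using less.IH by blast
    moreover have "sos4 (int p)" using prime_sos4 p(1) by (simp add: prime_nat_int_transfer)
    ultimately show ?thesis using k sos4_mult by (metis of_nat_mult mult.commute)
  qed
qed

definition blk :: "int \<Rightarrow> int \<Rightarrow> int list" where
  "blk u a = (if u dvd a then [a+1, a-1] else [a, a, 1, 1])"

lemma one_in_C: "u \<ge> 2 \<Longrightarrow> (1::int) \<in> C u"
  unfolding C_def using zdvd_imp_le[of u 1] by auto

lemma blk_props:
  assumes "u \<ge> 2"
  shows "set (blk u a) \<subseteq> C u" "sum_list (map (\<lambda>v. v\<^sup>2) (blk u a)) = 2*a\<^sup>2 + 2"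
    "length (blk u a) \<le> 4"
proof -
  show "length (blk u a) \<le> 4" unfolding blk_def by simp
  show "sum_list (map (\<lambda>v. v\<^sup>2) (blk u a)) = 2*a\<^sup>2 + 2"
    unfolding blk_def by (simp add: power2_eq_square algebra_simps)
  show "set (blk u a) \<subseteq> C u"
  proof (cases "u dvd a")
    case True
    have "\<not> u dvd a + 1"
    proof
      assume "u dvd a + 1"
      then have "u dvd (a+1) - a" using True by (rule dvd_diff)
      then show False using one_in_C[OF assms] unfolding C_def by simp
    qed
    moreover have "\<not> u dvd a - 1"
    proof
      assume "u dvd a - 1"
      with True have "u dvd a - (a - 1)" by (rule dvd_diff)
      then show False using one_in_C[OF assms] unfolding C_def by simp
    qed
    ultimately show ?thesis using True unfolding blk_def C_def by auto
  next
    case False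
    then show ?thesis using one_in_C[OF assms] unfolding blk_def C_def by auto
  qed
qed

lemma list_sum_nth: "sum_list (map g L) = (\<Sum>i<length L. g (L ! i))"
  by (simp add: sum_list_sum_nth atLeast0LessThan)

theorem theorem2p3:
  fixes u n :: int
  assumes "u \<ge> 2" and "n \<ge> 0"
  shows "\<exists>k::nat. \<exists>x::nat \<Rightarrow> int. k \<le> 5940 \<and> (\<forall>i<k. x i \<in> C u) \<and> n = (\<Sum>i<k. (x i)^2)"
proof (cases "n < 8")
  case True
  have "nat n \<le> 5940" using True by simp
  moreover have "\<forall>i<nat n. (\<lambda>_. (1::int)) i \<in> C u" using one_in_C[OF assms(1)] by simp
  moreover have "n = (\<Sum>i<nat n. ((\<lambda>_. (1::int)) i)^2)" using assms(2) by simp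
  ultimately show ?thesis by (intro exI[of _ "nat n"] exI[of _ "\<lambda>_. (1::int)"]) simp
next
  case False
  define e where "e = n mod 2"
  define M where "M = (n - 8 - e) div 2"
  have e01: "e = 0 \<or> e = 1" unfolding e_def by presburger
  have nM: "n = 2*M + 8 + e" unfolding M_def e_def by presburger
  have M0: "M \<ge> 0" using False e01 nM by linarith
  obtain a b c d where abcd: "int (nat M) = a\<^sup>2+b\<^sup>2+c\<^sup>2+d\<^sup>2" using all_sos4[of "nat M"] sos4_def by auto
  then have Mabcd: "M = a\<^sup>2+b\<^sup>2+c\<^sup>2+d\<^sup>2" using M0 by simp
  define L where "L = blk u a @ blk u b @ blk u c @ blk u d @ replicate (nat e) 1"
  have e0: "e \<ge> 0" using e01 by auto
  have ne: "nat e \<le> 1" using e01 by auto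
  have "length L = length (blk u a) + length (blk u b) + length (blk u c) + length (blk u d) + nat e"
    by (simp add: L_def)
  then have len: "length L \<le> 5940" using blk_props(3)[OF assms(1), of a] blk_props(3)[OF assms(1), of b]
    blk_props(3)[OF assms(1), of c] blk_props(3)[OF assms(1), of d] ne by linarith
  have mem: "set L \<subseteq> C u" unfolding L_def using blk_props(1)[OF assms(1)] one_in_C[OF assms(1)]
    by (simp add: set_replicate_conv_if)
  have "sum_list (map (\<lambda>v. v\<^sup>2) L) = sum_list (map (\<lambda>v. v\<^sup>2) (blk u a)) + sum_list (map (\<lambda>v. v\<^sup>2) (blk u b))
     + sum_list (map (\<lambda>v. v\<^sup>2) (blk u c)) + sum_list (map (\<lambda>v. v\<^sup>2) (blk u d)) + int (nat e)"
    by (simp add: L_def sum_list_replicate)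
  then have "sum_list (map (\<lambda>v. v\<^sup>2) L) = (2*a\<^sup>2+2) + (2*b\<^sup>2+2) + (2*c\<^sup>2+2) + (2*d\<^sup>2+2) + e"
    using blk_props(2)[OF assms(1)] e0 by simp
  then have S: "sum_list (map (\<lambda>v. v\<^sup>2) L) = n" using nM Mabcd by linarith
  have sumL: "n = (\<Sum>i<length L. (L ! i)^2)" using S list_sum_nth[of "\<lambda>v. v\<^sup>2" L] by simp
  have "\<forall>i<length L. L ! i \<in> C u" using mem by auto
  then show ?thesis using len sumL by (intro exI[of _ "length L"] exI[of _ "\<lambda>i. L ! i"]) simp
qed

end
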